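(* Let $\theta>1$, $r\in(\theta^{-1},\theta^{-1/2}]$ and \[ \beta^*:=\frac{1-r^2\theta}{r\theta}\max\Big(\frac{1}{1-r},\frac{1}{r\theta-1}\Big). \] Let $\mathsf{A}$ be any deterministic online algorithm for one-max search with predictions having robustness $r$ and consistency $\frac1{r\theta}$, and suppose there is $\beta\ge0$ such that for all $n\ge1$, all $p\in[1,\theta]^n$ with maximum $p^*$ and all $y\in[1,\theta]$, \[ \frac{\mathsf{A}(p,y)}{p^*}\ge\max\Big(r,\ \frac1{r\theta}-\beta\,\frac{|p^*-y|}{p^*}\Big). \] Then $\beta\ge\beta^*$. Moreover, the algorithm $\mathsf{A}^1_r$ satisfies this inequality (for all $n,p,y$) with $\beta=\beta^*$.
   Context: One-max search: fix $\theta>1$. An instance is a sequence of prices $p=(p_1,\dots,p_n)\in[1,\theta]^n$, revealed one at a time; the algorithm receives at the start a prediction $y\in[1,\theta]$ of $p^*:=\max_ip_i$. At each step it irrevocably accepts the current price (payoff = that price) or rejects it; if nothing is accepted by step $n$ the payoff is $1$. Consistency: $\inf_p \mathsf{A}(p,p^* )/p^*$; robustness: $\inf_{p,y}\mathsf{A}(p,y)/p^*$. For $\Phi:[1,\theta]\to[1,\theta]$, the threshold algorithm $\mathsf{A}_\Phi$ accepts the first $p_i$ with $p_i\ge\Phi(y)$. Let $\varphi_r(z)=\frac{r\theta-1}{1-r}+\frac{1-r^2\theta}{1-r}\cdot\frac{z}{r\theta}$ and $\Phi^1_r(z)=\max(r\theta,\varphi_r(z))$; $\mathsf{A}^1_r:=\mathsf{A}_{\Phi^1_r}$.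 *)

theory Defs
  imports Complex_Main
begin

text \<open>A deterministic online algorithm with prediction: given the prediction y and the
history of prices revealed so far (the last list element is the current price),
it decides whether to accept the current price.\<close>
type_synonym algorithm = "real \<Rightarrow> real list \<Rightarrow> bool"

fun run :: "algorithm \<Rightarrow> real \<Rightarrow> real list \<Rightarrow> real list \<Rightarrow> real" where
  "run A y hist [] = 1"
| "run A y hist (x # xs) = (if A y (hist @ [x]) then x else run A y (hist @ [x]) xs)"

definition payoff :: "algorithm \<Rightarrow> real \<Rightarrow> real list \<Rightarrow> real" where
  "payoff A y p = run A y [] p"

definition valid_instance :: "real \<Rightarrow> real list \<Rightarrow> bool" where
  "valid_instance \<theta> p \<longleftrightarrow> p \<noteq> [] \<and> (\<forall>x\<in>set p. 1 \<le> x \<and> x \<le> \<theta>)"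

definition pmax :: "real list \<Rightarrow> real" where
  "pmax p = Max (set p)"

definition has_robustness :: "real \<Rightarrow> algorithm \<Rightarrow> real \<Rightarrow> bool" where
  "has_robustness \<theta> A c \<longleftrightarrow>
     (\<forall>p y. valid_instance \<theta> p \<and> 1 \<le> y \<and> y \<le> \<theta> \<longrightarrow> payoff A y p / pmax p \<ge> c)"

definition has_consistency :: "real \<Rightarrow> algorithm \<Rightarrow> real \<Rightarrow> bool" where
  "has_consistency \<theta> A c \<longleftrightarrow>
     (\<forall>p. valid_instance \<theta> p \<longrightarrow> payoff A (pmax p) p / pmax p \<ge> c)"

definition satisfies_bound :: "real \<Rightarrow> real \<Rightarrow> real \<Rightarrow> algorithm \<Rightarrow> bool" where
  "satisfies_bound \<theta> r \<beta> A \<longleftrightarrow>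
     (\<forall>p y. valid_instance \<theta> p \<and> 1 \<le> y \<and> y \<le> \<theta> \<longrightarrow>
        payoff A y p / pmax p \<ge> max r (1 / (r * \<theta>) - \<beta> * \<bar>pmax p - y\<bar> / pmax p))"

definition threshold_alg :: "(real \<Rightarrow> real) \<Rightarrow> algorithm" where
  "threshold_alg \<Phi> y hist \<longleftrightarrow> last hist \<ge> \<Phi> y"

definition phi_r :: "real \<Rightarrow> real \<Rightarrow> real \<Rightarrow> real" where
  "phi_r \<theta> r z = (r * \<theta> - 1) / (1 - r) + (1 - r\<^sup>2 * \<theta>) / (1 - r) * (z / (r * \<theta>))"

definition Phi1 :: "real \<Rightarrow> real \<Rightarrow> real \<Rightarrow> real" where
  "Phi1 \<theta> r z = max (r * \<theta>) (phi_r \<theta> r z)"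

definition A1 :: "real \<Rightarrow> real \<Rightarrow> algorithm" where
  "A1 \<theta> r = threshold_alg (Phi1 \<theta> r)"

definition beta_star :: "real \<Rightarrow> real \<Rightarrow> real" where
  "beta_star \<theta> r = (1 - r\<^sup>2 * \<theta>) / (r * \<theta>) * max (1 / (1 - r)) (1 / (r * \<theta> - 1))"

end

theory Submission
  imports Defs
begin

lemma run_threshold:
  "(run (threshold_alg \<Phi>) y hist p = 1 \<and> (\<forall>x\<in>set p. x < \<Phi> y)) \<or>
   (run (threshold_alg \<Phi>) y hist p \<in> set p \<and> run (threshold_alg \<Phi>) y hist p \<ge> \<Phi> y)"
  by (induction p arbitrary: hist) (auto simp: threshold_alg_def)

lemma pmax_props:
  assumes "valid_instance \<theta> p"
  shows "pmax p \<in> set p" "\<forall>x\<in>set p. x \<le> pmax p" "1 \<le> pmax p" "pmax p \<le> \<theta>"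
proof -
  have ne: "set p \<noteq> {}" using assms by (auto simp: valid_instance_def)
  show 1: "pmax p \<in> set p" unfolding pmax_def using ne by simp
  show "\<forall>x\<in>set p. x \<le> pmax p" unfolding pmax_def by simp
  show "1 \<le> pmax p" "pmax p \<le> \<theta>" using 1 assms by (auto simp: valid_instance_def)
qed

lemma basic:
  fixes \<theta> r :: real
  assumes "\<theta> > 1" and "1 / \<theta> < r" and "r \<le> 1 / sqrt \<theta>"
  shows "r > 0" "r * \<theta> > 1" "r < 1" "r^2 * \<theta> \<le> 1"
proof -
  show r0: "r > 0" using assms by (smt (verit) divide_pos_pos)
  show "r * \<theta> > 1" using assms by (simp add: field_simps)
  have s: "sqrt \<theta> > 1" using assms by simp
  then show "r < 1" using assms(3) by (smt (verit) divide_less_eq_1_pos)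
  have "r * sqrt \<theta> \<le> 1" using assms(3) s by (simp add: field_simps)
  then have "(r * sqrt \<theta>)^2 \<le> 1" using r0 s
    by (smt (verit) mult_pos_pos power_le_one)
  then show "r^2 * \<theta> \<le> 1" using assms(1) by (simp add: power_mult_distrib)
qed

lemma idents: fixes q w r \<theta> z y :: real assumes nz: "q \<noteq> 0" "w \<noteq> 0" "r \<noteq> 0" "\<theta> \<noteq> 0" and qd: "q = 1 - r" and wd: "w = r * \<theta> - 1"
 shows "(r * \<theta> - 1) / q + (1 - r\<^sup>2 * \<theta>) / q * (z / (r * \<theta>)) = 1 / r - (1 - r^2 * \<theta>) / (r * \<theta>) * (1 / q) * (\<theta> - z)"
   "((r * \<theta> - 1) / q + (1 - r\<^sup>2 * \<theta>) / q * (y / (r * \<theta>))) - y / (r * \<theta>) = w / q * (1 - y / \<theta>)"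
   "(r * \<theta> - 1) / q + (1 - r\<^sup>2 * \<theta>) / q * ((r * \<theta>) / (r * \<theta>)) = r * \<theta>"
   "(r * \<theta> - 1) / q + (1 - r\<^sup>2 * \<theta>) / q * (\<theta> / (r * \<theta>)) = 1 / r"
   "((r * \<theta> - 1) / q + (1 - r\<^sup>2 * \<theta>) / q * (y / (r * \<theta>))) / (r * \<theta>) - (1 - r^2 * \<theta>) / (r * \<theta>) * (1 / w) * (y - ((r * \<theta> - 1) / q + (1 - r\<^sup>2 * \<theta>) / q * (y / (r * \<theta>)))) = 1"
  using nz apply (simp_all add: field_simps power2_eq_square)
  unfolding qd wd by (simp_all add: algebra_simps)

lemma part2_arith:
  fixes \<theta> r y P a :: real
  assumes th: "\<theta> > 1" and r0: "r > 0" and rt: "r * \<theta> > 1" and r1: "r < 1" and rr: "r^2 * \<theta> \<le> 1"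
    and y: "1 \<le> y" "y \<le> \<theta>" and P: "1 \<le> P" "P \<le> \<theta>"
    and cases: "(a = 1 \<and> P < Phi1 \<theta> r y) \<or> (a \<ge> Phi1 \<theta> r y \<and> a \<le> P)"
  shows "a / P \<ge> max r (1 / (r * \<theta>) - beta_star \<theta> r * \<bar>P - y\<bar> / P)"
proof -
  define c where "c = (1 - r^2 * \<theta>) / (r * \<theta>) * (1 / (1 - r))"
  define d where "d = (1 - r^2 * \<theta>) / (r * \<theta>) * (1 / (r * \<theta> - 1))"
  define B where "B = beta_star \<theta> r"
  define T where "T = Phi1 \<theta> r y"
  have k0: "(1 - r^2 * \<theta>) / (r * \<theta>) \<ge> 0" using rr rt by simp
  have c0: "c \<ge> 0" unfolding c_def using k0 r1 by (intro mult_nonneg_nonneg) auto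
  have d0: "d \<ge> 0" unfolding d_def using k0 rt by (intro mult_nonneg_nonneg) auto
  have Bc: "B \<ge> c" unfolding B_def beta_star_def c_def by (rule mult_left_mono[OF max.cobounded1 k0])
  have Bd: "B \<ge> d" unfolding B_def beta_star_def d_def by (rule mult_left_mono[OF max.cobounded2 k0])
  note I = idents[of "1 - r" "r * \<theta> - 1" r \<theta>, OF _ _ _ _ refl refl]
  have nz: "1 - r \<noteq> 0" "r * \<theta> - 1 \<noteq> 0" "r \<noteq> 0" "\<theta> \<noteq> 0" using r1 rt r0 th by auto
  have phi: "phi_r \<theta> r z = 1 / r - c * (\<theta> - z)" for z
    unfolding phi_r_def c_def using I(1)[OF nz] .
  have phi_ge: "phi_r \<theta> r y \<ge> y / (r * \<theta>)"
  proof -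
    have "phi_r \<theta> r y - y / (r * \<theta>) = (r * \<theta> - 1) / (1 - r) * (1 - y / \<theta>)"
      unfolding phi_r_def using I(2)[OF nz] .
    moreover have "(r * \<theta> - 1) / (1 - r) * (1 - y / \<theta>) \<ge> 0"
      using rt r1 y th by (intro mult_nonneg_nonneg) (auto simp: field_simps)
    ultimately show ?thesis by linarith
  qed
  have phi_rt: "phi_r \<theta> r (r * \<theta>) = r * \<theta>"
    unfolding phi_r_def using I(3)[OF nz] .
  have phi_th: "phi_r \<theta> r \<theta> = 1 / r"
    unfolding phi_r_def using I(4)[OF nz] .
  have dident: "phi_r \<theta> r y / (r * \<theta>) - d * (y - phi_r \<theta> r y) = 1"
    unfolding phi_r_def d_def using I(5)[OF nz] .
  have T1: "T \<ge> r * \<theta>" "T \<ge> phi_r \<theta> r y" unfolding T_def Phi1_def by auto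
  have rtle: "r * \<theta> \<le> 1 / r" using rr r0 by (simp add: field_simps power2_eq_square)
  have phile: "phi_r \<theta> r y \<le> 1 / r" unfolding phi using c0 y by (simp add: mult_nonneg_nonneg)
  have T2: "T \<le> 1 / r" unfolding T_def Phi1_def using rtle phile by simp
  have P0: "P > 0" using P by simp
  have goal1: "a \<ge> r * P" and goal2: "a \<ge> P / (r * \<theta>) - B * \<bar>P - y\<bar>"
  proof -
    from cases have "(a = 1 \<and> P < T) \<or> (a \<ge> T \<and> a \<le> P)" unfolding T_def .
    then have "a \<ge> r * P \<and> a \<ge> P / (r * \<theta>) - B * \<bar>P - y\<bar>"
    proof
      assume A: "a = 1 \<and> P < T"
      have g1: "r * P < 1"
      proof -
        have "r * P < r * T" using A r0 by simp
        also have "r * T \<le> 1" using T2 r0 by (simp add: field_simps)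
        finally show ?thesis .
      qed
      have "P / (r * \<theta>) - B * \<bar>P - y\<bar> \<le> 1"
      proof (cases "P \<le> r * \<theta>")
        case True
        then have "P / (r * \<theta>) \<le> 1" using rt by (simp add: divide_le_eq_1)
        moreover have "B * \<bar>P - y\<bar> \<ge> 0" using Bd d0 by simp
        ultimately show ?thesis by linarith
      next
        case False
        have Tp: "T = phi_r \<theta> r y" using A False unfolding T_def Phi1_def by auto
        have "phi_r \<theta> r y - r * \<theta> = c * (y - r * \<theta>)"
          using phi[of y] phi[of "r * \<theta>"] phi_rt by (simp add: algebra_simps)
        moreover have "phi_r \<theta> r y > r * \<theta>" using A False Tp by simp
        ultimately have "c * (y - r * \<theta>) > 0" by simp
        then have yrt: "y > r * \<theta>" using c0 mult_nonneg_nonpos[of c "y - r * \<theta>"] by linarith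
        have "phi_r \<theta> r y \<le> y"
        proof -
          have "phi_r \<theta> r y = r * \<theta> + c * (y - r * \<theta>)"
            using phi[of y] phi[of "r * \<theta>"] phi_rt by (simp add: algebra_simps)
          moreover have "phi_r \<theta> r \<theta> = r * \<theta> + c * (\<theta> - r * \<theta>)"
            using phi[of \<theta>] phi[of "r * \<theta>"] phi_rt by (simp add: algebra_simps)
          ultimately have e: "phi_r \<theta> r y = r * \<theta> + c * (y - r * \<theta>)"
            and f: "1 / r = r * \<theta> + c * (\<theta> - r * \<theta>)" using phi_th by auto
          have "1 / r \<le> \<theta>" using rt r0 by (simp add: field_simps)
          then have "c * (\<theta> - r * \<theta>) \<le> \<theta> - r * \<theta>" using f by simp
          moreover have "\<theta> - r * \<theta> > 0" using r1 th by simp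
          ultimately have "c \<le> 1" by (simp add: mult_le_cancel_right1)
          then have "c * (y - r * \<theta>) \<le> y - r * \<theta>" using yrt
            by (simp add: mult_le_cancel_right1)
          then show ?thesis using e by simp
        qed
        then have Py: "P < y" using A Tp by simp
        have "P / (r * \<theta>) - B * \<bar>P - y\<bar> \<le> P / (r * \<theta>) - d * (y - P)"
          using Py Bd by (simp add: mult_right_mono)
        also have "\<dots> \<le> phi_r \<theta> r y / (r * \<theta>) - d * (y - phi_r \<theta> r y)"
        proof -
          have "P / (r * \<theta>) \<le> phi_r \<theta> r y / (r * \<theta>)" using A Tp rt
            by (simp add: divide_right_mono)
          moreover have "d * (y - phi_r \<theta> r y) \<le> d * (y - P)" using A Tp d0
            by (simp add: mult_left_mono)
          ultimately show ?thesis by linarith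
        qed
        finally show ?thesis using dident by simp
      qed
      then show ?thesis using A g1 by simp
    next
      assume A: "a \<ge> T \<and> a \<le> P"
      have g1: "r * P \<le> a"
      proof -
        have "r * P \<le> r * \<theta>" using P r0 by simp
        then show ?thesis using A T1 by linarith
      qed
      have "P / (r * \<theta>) - B * \<bar>P - y\<bar> \<le> T"
      proof (cases "P \<le> y")
        case True
        have "P / (r * \<theta>) \<le> y / (r * \<theta>)" using True rt by (simp add: divide_right_mono)
        moreover have "B * \<bar>P - y\<bar> \<ge> 0" using Bd d0 by simp
        ultimately show ?thesis using phi_ge T1 by linarith
      next
        case False
        define t where "t = P - y"
        have t: "0 \<le> t" "t \<le> \<theta> - y" using False P unfolding t_def by auto
        have eq: "P / (r * \<theta>) - B * \<bar>P - y\<bar> = y / (r * \<theta>) + t * (1 / (r * \<theta>) - B)"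
          unfolding t_def using False rt nz by (simp add: field_simps)
        show ?thesis
        proof (cases "1 / (r * \<theta>) \<ge> B")
          case True
          have "t * (1 / (r * \<theta>) - B) \<le> (\<theta> - y) * (1 / (r * \<theta>) - B)"
            using t True by (simp add: mult_right_mono)
          moreover have "y / (r * \<theta>) + (\<theta> - y) * (1 / (r * \<theta>) - B) = 1 / r - B * (\<theta> - y)"
            using rt th nz by (simp add: field_simps)
          moreover have "B * (\<theta> - y) \<ge> c * (\<theta> - y)" using Bc y by (simp add: mult_right_mono)
          ultimately show ?thesis using eq phi[of y] T1 by linarith
        next
          case False
          have "t * (1 / (r * \<theta>) - B) \<le> 0" using t False by (simp add: mult_nonneg_nonpos)
          then show ?thesis using eq phi_ge T1 by linarith
        qed
      qed
      then show ?thesis using A g1 by linarith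
    qed
    then show "a \<ge> r * P" "a \<ge> P / (r * \<theta>) - B * \<bar>P - y\<bar>" by auto
  qed
  have "a / P \<ge> r" using goal1 P0 by (simp add: field_simps)
  moreover have "a / P \<ge> 1 / (r * \<theta>) - B * \<bar>P - y\<bar> / P"
  proof -
    have "1 / (r * \<theta>) - B * \<bar>P - y\<bar> / P = (P / (r * \<theta>) - B * \<bar>P - y\<bar>) / P"
      using P0 rt by (simp add: field_simps)
    then show ?thesis using goal2 P0 by (simp add: divide_right_mono)
  qed
  ultimately show ?thesis unfolding B_def by simp
qed

lemma part2:
  fixes \<theta> r :: real
  assumes "\<theta> > 1" and "1 / \<theta> < r" and "r \<le> 1 / sqrt \<theta>"
  shows "satisfies_bound \<theta> r (beta_star \<theta> r) (A1 \<theta> r)"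
  unfolding satisfies_bound_def
proof (intro allI impI)
  fix p y assume h: "valid_instance \<theta> p \<and> 1 \<le> y \<and> y \<le> \<theta>"
  note b = basic[OF assms]
  note pm = pmax_props[of \<theta> p]
  have "(payoff (A1 \<theta> r) y p = 1 \<and> pmax p < Phi1 \<theta> r y) \<or>
        (payoff (A1 \<theta> r) y p \<ge> Phi1 \<theta> r y \<and> payoff (A1 \<theta> r) y p \<le> pmax p)"
    using run_threshold[of "Phi1 \<theta> r" y "[]" p] pm h
    unfolding payoff_def A1_def by blast
  then show "max r (1 / (r * \<theta>) - beta_star \<theta> r * \<bar>pmax p - y\<bar> / pmax p)
       \<le> payoff (A1 \<theta> r) y p / pmax p"
    using part2_arith[OF assms(1) b, of y "pmax p" "payoff (A1 \<theta> r) y p"] pm h by blast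
qed

lemma lower_d:
  fixes \<theta> r \<beta> :: real and A :: algorithm
  assumes th: "\<theta> > 1" and r0: "r > 0" and rt: "r * \<theta> > 1"
    and cons: "has_consistency \<theta> A (1 / (r * \<theta>))"
    and sb: "satisfies_bound \<theta> r \<beta> A"
    and x: "1 \<le> x" "x < 1 / r"
  shows "\<beta> * (\<theta> - x) \<ge> x / (r * \<theta>) - 1"
proof -
  have rle: "1 / r < \<theta>" using rt r0 by (simp add: field_simps)
  have xt: "x < \<theta>" using x rle by linarith
  have v2: "valid_instance \<theta> [x, \<theta>]" using x xt th by (auto simp: valid_instance_def)
  have pm2: "pmax [x, \<theta>] = \<theta>" using xt by (simp add: pmax_def)
  have nA: "\<not> A \<theta> [x]"
  proof
    assume a: "A \<theta> [x]"
    have "payoff A \<theta> [x, \<theta>] = x" using a by (simp add: payoff_def)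
    moreover have "payoff A (pmax [x, \<theta>]) [x, \<theta>] / pmax [x, \<theta>] \<ge> 1 / (r * \<theta>)"
      using cons v2 unfolding has_consistency_def by blast
    ultimately have "x / \<theta> \<ge> 1 / (r * \<theta>)" using pm2 by simp
    then have "x \<ge> 1 / r" using th by (simp add: field_simps)
    then show False using x by simp
  qed
  have v1: "valid_instance \<theta> [x]" using x xt by (auto simp: valid_instance_def)
  have pm1: "pmax [x] = x" by (simp add: pmax_def)
  have pay: "payoff A \<theta> [x] = 1" using nA by (simp add: payoff_def)
  have "payoff A \<theta> [x] / pmax [x] \<ge> max r (1 / (r * \<theta>) - \<beta> * \<bar>pmax [x] - \<theta>\<bar> / pmax [x])"
    using sb v1 th unfolding satisfies_bound_def by auto
  then have "1 / x \<ge> 1 / (r * \<theta>) - \<beta> * (\<theta> - x) / x" using pay pm1 xt by simp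
  then have "x * (1 / x) \<ge> x * (1 / (r * \<theta>) - \<beta> * (\<theta> - x) / x)"
    by (rule mult_left_mono) (use x in simp)
  moreover have "x * (1 / x) = 1" using x by simp
  moreover have "x * (1 / (r * \<theta>) - \<beta> * (\<theta> - x) / x) = x / (r * \<theta>) - \<beta> * (\<theta> - x)"
    using x by (simp add: field_simps)
  ultimately show ?thesis by linarith
qed

lemma lower_c:
  fixes \<theta> r \<beta> :: real and A :: algorithm
  assumes th: "\<theta> > 1" and r0: "r > 0" and rt: "r * \<theta> > 1"
    and cons: "has_consistency \<theta> A (1 / (r * \<theta>))"
    and sb: "satisfies_bound \<theta> r \<beta> A"
    and y: "r * \<theta> < y" "y \<le> \<theta>"
  shows "\<beta> * (\<theta> - y) \<ge> 1 / r - y"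
proof -
  have v1: "valid_instance \<theta> [y]" using y rt by (auto simp: valid_instance_def)
  have pm1: "pmax [y] = y" by (simp add: pmax_def)
  have yA: "A y [y]"
  proof (rule ccontr)
    assume a: "\<not> A y [y]"
    have "payoff A y [y] = 1" using a by (simp add: payoff_def)
    moreover have "payoff A (pmax [y]) [y] / pmax [y] \<ge> 1 / (r * \<theta>)"
      using cons v1 unfolding has_consistency_def by blast
    ultimately have "1 / y \<ge> 1 / (r * \<theta>)" using pm1 by simp
    then have "y \<le> r * \<theta>" using rt y by (simp add: field_simps)
    then show False using y by simp
  qed
  have v2: "valid_instance \<theta> [y, \<theta>]" using y rt th by (auto simp: valid_instance_def)
  have pm2: "pmax [y, \<theta>] = \<theta>" using y by (simp add: pmax_def)
  have pay: "payoff A y [y, \<theta>] = y" using yA by (simp add: payoff_def)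
  have "payoff A y [y, \<theta>] / pmax [y, \<theta>] \<ge> max r (1 / (r * \<theta>) - \<beta> * \<bar>pmax [y, \<theta>] - y\<bar> / pmax [y, \<theta>])"
    using sb v2 y rt unfolding satisfies_bound_def by auto
  then have "y / \<theta> \<ge> 1 / (r * \<theta>) - \<beta> * (\<theta> - y) / \<theta>" using pay pm2 y by simp
  then have "\<theta> * (y / \<theta>) \<ge> \<theta> * (1 / (r * \<theta>) - \<beta> * (\<theta> - y) / \<theta>)"
    by (rule mult_left_mono) (use th in simp)
  moreover have "\<theta> * (y / \<theta>) = y" using th by simp
  moreover have "\<theta> * (1 / (r * \<theta>) - \<beta> * (\<theta> - y) / \<theta>) = 1 / r - \<beta> * (\<theta> - y)"
    using th r0 by (simp add: field_simps)
  ultimately show ?thesis by linarith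
qed

lemma idents2: fixes q w r \<theta> :: real assumes nz: "q \<noteq> 0" "w \<noteq> 0" "r \<noteq> 0" "\<theta> \<noteq> 0" and qd: "q = 1 - r" and wd: "w = r * \<theta> - 1"
 shows "\<theta> * q * ((1 - r^2 * \<theta>) / (r * \<theta>) * (1 / q)) = 1 / r - r * \<theta>"
   "(\<theta> - 1 / r) * ((1 - r^2 * \<theta>) / (r * \<theta>) * (1 / w)) = 1 / (r^2 * \<theta>) - 1"
  using nz apply (simp_all add: field_simps power2_eq_square)
  unfolding qd wd by (simp_all add: algebra_simps)

lemma part1:
  fixes \<theta> r \<beta> :: real and A :: algorithm
  assumes "\<theta> > 1" and "1 / \<theta> < r" and "r \<le> 1 / sqrt \<theta>"
    and cons: "has_consistency \<theta> A (1 / (r * \<theta>))"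
    and sb: "satisfies_bound \<theta> r \<beta> A" and b0: "\<beta> \<ge> 0"
  shows "\<beta> \<ge> beta_star \<theta> r"
proof -
  note b = basic[OF assms(1-3)]
  have th: "\<theta> > 1" using assms by simp
  have r0: "r > 0" and rt: "r * \<theta> > 1" and r1: "r < 1" and rr: "r^2 * \<theta> \<le> 1" using b by auto
  have nz: "1 - r \<noteq> 0" "r * \<theta> - 1 \<noteq> 0" "r \<noteq> 0" "\<theta> \<noteq> 0" using r1 rt r0 th by auto
  note I = idents2[of "1 - r" "r * \<theta> - 1" r \<theta>, OF nz refl refl]
  define k where "k = (1 - r^2 * \<theta>) / (r * \<theta>)"
  define c where "c = k * (1 / (1 - r))"
  define d where "d = k * (1 / (r * \<theta> - 1))"
  have Ic: "\<theta> * (1 - r) * c = 1 / r - r * \<theta>" using I(1) unfolding c_def k_def .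
  have Id: "(\<theta> - 1 / r) * d = 1 / (r^2 * \<theta>) - 1" using I(2) unfolding d_def k_def .
  have bc: "\<beta> \<ge> c"
  proof (rule ccontr)
    assume "\<not> \<beta> \<ge> c"
    then have "c - \<beta> > 0" by simp
    moreover have "\<theta> * (1 - r) > 0" using th r1 by simp
    ultimately have "\<theta> * (1 - r) * (c - \<beta>) > 0" by simp
    then have G: "1 / r - r * \<theta> - \<beta> * (\<theta> - r * \<theta>) > 0" using Ic by (simp add: algebra_simps)
    define G where "G = 1 / r - r * \<theta> - \<beta> * (\<theta> - r * \<theta>)"
    define e where "e = min (G / 2) ((\<theta> - r * \<theta>) / 2)"
    have e0: "e > 0" unfolding e_def G_def using G th r1 by simp
    have e1: "e \<le> G / 2" "e \<le> (\<theta> - r * \<theta>) / 2" unfolding e_def by (rule min.cobounded1, rule min.cobounded2)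
    have "\<beta> * (\<theta> - (r * \<theta> + e)) \<ge> 1 / r - (r * \<theta> + e)"
      using lower_c[OF th r0 rt cons sb, of "r * \<theta> + e"] e0 e1 th r1 by simp
    moreover have "\<beta> * e \<ge> 0" using b0 e0 by simp
    moreover have "\<beta> * (\<theta> - (r * \<theta> + e)) = \<beta> * (\<theta> - r * \<theta>) - \<beta> * e" by (simp add: algebra_simps)
    ultimately show False using e1 G unfolding G_def by argo
  qed
  have bd: "\<beta> \<ge> d"
  proof (rule ccontr)
    assume "\<not> \<beta> \<ge> d"
    then have "d - \<beta> > 0" by simp
    moreover have "\<theta> - 1 / r > 0" using rt r0 by (simp add: field_simps)
    ultimately have "(\<theta> - 1 / r) * (d - \<beta>) > 0" by simp
    moreover have "(\<theta> - 1 / r) * (d - \<beta>) = (\<theta> - 1 / r) * d - \<beta> * (\<theta> - 1 / r)"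
      by (simp add: algebra_simps diff_divide_distrib)
    ultimately have F: "1 / (r^2 * \<theta>) - 1 - \<beta> * (\<theta> - 1 / r) > 0" using Id by argo
    define F where "F = 1 / (r^2 * \<theta>) - 1 - \<beta> * (\<theta> - 1 / r)"
    define L where "L = 1 / (r * \<theta>) + \<beta>"
    have L0: "L > 0" unfolding L_def using b0 rt by (smt (verit) divide_pos_pos)
    define e where "e = min (F / (2 * L)) ((1 / r - 1) / 2)"
    have r1': "1 / r > 1" using r0 r1 by simp
    have e0: "e > 0" unfolding e_def F_def using F L0 r1' by simp
    have e1: "e \<le> F / (2 * L)" "e \<le> (1 / r - 1) / 2" unfolding e_def by (rule min.cobounded1, rule min.cobounded2)
    have eL: "e * L \<le> F / 2"
    proof -
      have "e * L \<le> F / (2 * L) * L" by (rule mult_right_mono) (use e1 L0 in auto)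
      also have "\<dots> = F / 2" using L0 by simp
      finally show ?thesis .
    qed
    have "\<beta> * (\<theta> - (1 / r - e)) \<ge> (1 / r - e) / (r * \<theta>) - 1"
      using lower_d[OF th r0 rt cons sb, of "1 / r - e"] e0 e1 by simp
    moreover have "(1 / r - e) / (r * \<theta>) - 1 - \<beta> * (\<theta> - (1 / r - e)) = F - e * L"
      unfolding F_def L_def using nz by (simp add: field_simps power2_eq_square)
    ultimately show False using eL F unfolding F_def by argo
  qed
  have "beta_star \<theta> r = k * max (1 / (1 - r)) (1 / (r * \<theta> - 1))"
    unfolding beta_star_def k_def ..
  also have "\<dots> \<le> \<beta>" using bc bd unfolding c_def d_def by (simp add: max_def)
  finally show ?thesis .
qed

theorem theorem4:
  fixes \<theta> r :: real
  assumes "\<theta> > 1" and "1 / \<theta> < r" and "r \<le> 1 / sqrt \<theta>"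
  shows "(\<forall>(A :: algorithm) (\<beta> :: real).
            has_robustness \<theta> A r \<and> has_consistency \<theta> A (1 / (r * \<theta>)) \<and>
            \<beta> \<ge> 0 \<and> satisfies_bound \<theta> r \<beta> A \<longrightarrow> \<beta> \<ge> beta_star \<theta> r)
         \<and> satisfies_bound \<theta> r (beta_star \<theta> r) (A1 \<theta> r)"
  using part1[OF assms] part2[OF assms] by blast

end
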